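(* Suppose Assumption 1 holds. Let $J\subseteq\{1,\dots,q\}$ with $|J|\le q^*$ and $J_0\setminus J\neq\emptyset$, and let $l=|J_0\setminus J|$. Then $$\|\Pi_{J_0}f\|^2-\|\Pi_Jf\|^2=\|f-\Pi_Jf\|^2\ge(1-\rho_{q^*}^2)\kappa_l.$$
   Context: Let $q\ge1$ and let $(Y,X)$ be a pair of random variables with $X=(X_1,\dots,X_q)^T$, each $X_j$ real-valued, and $Y=\sum_{j=1}^q f_j(X_j)+\epsilon$, where $f_j\in L^2(\mathbb P^{X_j})$, $\mathbb E[f_j(X_j)]=0$ for $j=1,\dots,q-1$, and $\epsilon$ is a centered Gaussian variable with variance $\sigma^2$, independent of $X$. Write $f(x)=\sum_{j=1}^qf_j(x_j)$. The space $L^2(\mathbb P^X)$ carries the inner product $\langle g,h\rangle=\mathbb E[g(X)h(X)]$ and norm $\|g\|=\langle g,g\rangle^{1/2}$. Let $H_q=L^2(\mathbb P^{X_q})$ and $H_j=\{h\in L^2(\mathbb P^{X_j}):\mathbb E[h(X_j)]=0\}$ for $j<q$, viewed as subspaces of $L^2(\mathbb P^X)$ via $x\mapsto h(x_j)$; for $J\subseteq\{1,\dots,q\}$ let $H_J=\sum_{j\in J}H_j$ (with $H_\emptyset=\{0\}$). Under Assumption 1 the spaces $H_J$ with $|J|\le 2q^*$ are closed, and $\Pi_J$ denotes the orthogonal projection of $L^2(\mathbb P^X)$ onto $H_J$. Let $J_0=\{j:\|f_j\|>0\}$, $s=|J_0|$, and let $q^*$ be an integer with $s\le q^*$. Let $\rho_{q^*}$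 be the supremum of $\langle h_1,h_2\rangle/(\|h_1\|\|h_2\|)$ over all nonzero $h_1\in H_{J_1}$, $h_2\in H_{J_2}$ and all $J_1,J_2\subseteq\{1,\dots,q\}$ with $J_1\cap J_2=\emptyset$ and $|J_1|,|J_2|\le q^*$. Assumption 1 is the condition $\rho_{q^*}<1$. For $1\le l\le s$, $\kappa_l=\min_{J'\subseteq J_0,|J'|=l}\|\sum_{j\in J'}f_j\|^2$. *)

theory Defs
  imports "HOL-Probability.Probability"
begin

text \<open>Random variables live on a probability space M. A function of X is represented
 by the random variable on M it induces; L2(P^X) inner product = integral over M.\<close>

definition ip :: "'a measure \<Rightarrow> ('a \<Rightarrow> real) \<Rightarrow> ('a \<Rightarrow> real) \<Rightarrow> real" where
  "ip M g h = integral\<^sup>L M (\<lambda>\<omega>. g \<omega> * h \<omega>)"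

definition nrm :: "'a measure \<Rightarrow> ('a \<Rightarrow> real) \<Rightarrow> real" where
  "nrm M g = sqrt (ip M g g)"

definition Hj :: "'a measure \<Rightarrow> nat \<Rightarrow> (nat \<Rightarrow> 'a \<Rightarrow> real) \<Rightarrow> nat \<Rightarrow> ('a \<Rightarrow> real) set" where
  "Hj M q X j = {g. \<exists>h. h \<in> borel_measurable borel \<and> g = (\<lambda>\<omega>. h (X j \<omega>))
      \<and> integrable M (\<lambda>\<omega>. (h (X j \<omega>))\<^sup>2)
      \<and> (j < q \<longrightarrow> integral\<^sup>L M (\<lambda>\<omega>. h (X j \<omega>)) = 0)}"

definition HJ :: "'a measure \<Rightarrow> nat \<Rightarrow> (nat \<Rightarrow> 'a \<Rightarrow> real) \<Rightarrow> nat set \<Rightarrow> ('a \<Rightarrow> real) set" where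
  "HJ M q X J = {g. \<exists>G. (\<forall>j\<in>J. G j \<in> Hj M q X j) \<and> g = (\<lambda>\<omega>. \<Sum>j\<in>J. G j \<omega>)}"

definition proj :: "'a measure \<Rightarrow> nat \<Rightarrow> (nat \<Rightarrow> 'a \<Rightarrow> real) \<Rightarrow> nat set \<Rightarrow> ('a \<Rightarrow> real) \<Rightarrow> ('a \<Rightarrow> real)" where
  "proj M q X J f = (SOME g. g \<in> HJ M q X J \<and>
      (\<forall>h\<in>HJ M q X J. ip M (\<lambda>\<omega>. f \<omega> - g \<omega>) h = 0))"

definition rho :: "'a measure \<Rightarrow> nat \<Rightarrow> (nat \<Rightarrow> 'a \<Rightarrow> real) \<Rightarrow> nat \<Rightarrow> real" where
  "rho M q X qs = (let S = {ip M h1 h2 / (nrm M h1 * nrm M h2) | J1 J2 h1 h2.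
       J1 \<subseteq> {1..q} \<and> J2 \<subseteq> {1..q} \<and> J1 \<inter> J2 = {} \<and> card J1 \<le> qs \<and> card J2 \<le> qs \<and>
       h1 \<in> HJ M q X J1 \<and> h2 \<in> HJ M q X J2 \<and> nrm M h1 > 0 \<and> nrm M h2 > 0}
     in if S = {} then 0 else Sup S)"

definition J0 :: "'a measure \<Rightarrow> nat \<Rightarrow> (nat \<Rightarrow> 'a \<Rightarrow> real) \<Rightarrow> (nat \<Rightarrow> real \<Rightarrow> real) \<Rightarrow> nat set" where
  "J0 M q X fj = {j \<in> {1..q}. nrm M (\<lambda>\<omega>. fj j (X j \<omega>)) > 0}"

definition kappa :: "'a measure \<Rightarrow> nat \<Rightarrow> (nat \<Rightarrow> 'a \<Rightarrow> real) \<Rightarrow> (nat \<Rightarrow> real \<Rightarrow> real) \<Rightarrow> nat \<Rightarrow> real" where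
  "kappa M q X fj l = Min {(nrm M (\<lambda>\<omega>. \<Sum>j\<in>J'. fj j (X j \<omega>)))\<^sup>2 | J'.
       J' \<subseteq> J0 M q X fj \<and> card J' = l}"

end

theory Submission imports Defs begin

lemma quad_lemma:
  fixes a b c :: real
  assumes H: "\<And>t. 0 \<le> a - 2*t*b + t\<^sup>2*c"
  shows "b\<^sup>2 \<le> a*c"
proof -
  have a0: "0 \<le> a" using H[of 0] by simp
  show ?thesis
  proof (cases "c > 0")
    case True
    have "0 \<le> a - 2*(b/c)*b + (b/c)\<^sup>2*c" by (rule H)
    also have "\<dots> = a - b\<^sup>2/c" using True by (simp add: power2_eq_square field_simps)
    finally show ?thesis using True by (simp add: field_simps)
  next
    case False
    have "b = 0"
    proof (rule ccontr)
      assume b: "b \<noteq> 0"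
      have "0 \<le> a - 2*((a+1)/(2*b))*b + ((a+1)/(2*b))\<^sup>2*c" by (rule H)
      also have "\<dots> \<le> a - 2*((a+1)/(2*b))*b"
        using False by (simp add: mult_nonneg_nonpos)
      also have "\<dots> = -1" using b by (simp add: field_simps)
      finally show False by simp
    qed
    moreover have "c \<ge> 0"
    proof (rule ccontr)
      assume c: "\<not> c \<ge> 0"
      have "0 \<le> a - 2*t*b + t\<^sup>2*c" for t by (rule H)
      then have "0 \<le> a + t\<^sup>2*c" for t using \<open>b=0\<close> by simp
      from this[of "sqrt ((a+1)/(-c))"] c a0 show False by (simp add: field_simps)
    qed
    ultimately show ?thesis using a0 by simp
  qed
qed

definition sqi :: "'a measure \<Rightarrow> ('a \<Rightarrow> real) \<Rightarrow> bool" where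
  "sqi M g \<longleftrightarrow> g \<in> borel_measurable M \<and> integrable M (\<lambda>x. (g x)\<^sup>2)"

lemma ip_cmult1: "ip M (\<lambda>x. c * g x) h = c * ip M g h"
  unfolding ip_def by (simp add: mult.assoc)

lemma ip_sym: "ip M g h = ip M h g"
  unfolding ip_def by (simp add: mult.commute)

lemma ip_cmult2: "ip M g (\<lambda>x. c * h x) = c * ip M g h"
  unfolding ip_def by (simp add: mult.left_commute)

lemma ip_nonneg: "0 \<le> ip M g g"
  unfolding ip_def by (rule Bochner_Integration.integral_nonneg_AE) auto

lemma nrm_sq: "(nrm M g)\<^sup>2 = ip M g g"
  unfolding nrm_def using ip_nonneg by simp

lemma nrm_nonneg: "0 \<le> nrm M g"
  unfolding nrm_def using ip_nonneg by simp

lemma abs_le_1_sq: "\<bar>a::real\<bar> \<le> 1 + a\<^sup>2"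
proof -
  have "0 \<le> (\<bar>a\<bar> - 1)\<^sup>2" by simp
  then have "0 \<le> a\<^sup>2 - 2*\<bar>a\<bar> + 1" by (simp add: power2_diff)
  then show ?thesis by (smt (verit) zero_le_power2)
qed
lemma two_ab: "2*\<bar>a::real\<bar>*\<bar>b\<bar> \<le> a\<^sup>2 + b\<^sup>2"
proof -
  have "0 \<le> (\<bar>a\<bar> - \<bar>b\<bar>)\<^sup>2" by simp
  then show ?thesis by (simp add: power2_diff)
qed
lemma norm_mult_le: "norm (a * b::real) \<le> norm (a\<^sup>2 + b\<^sup>2)"
proof -
  have "0 \<le> \<bar>a\<bar>*\<bar>b\<bar>" by simp
  moreover have "norm (a*b) = \<bar>a\<bar>*\<bar>b\<bar>" by (simp add: abs_mult)
  moreover have "norm (a\<^sup>2 + b\<^sup>2) = a\<^sup>2 + b\<^sup>2" by simp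
  ultimately show ?thesis using two_ab[of a b] by linarith
qed
lemma sq_ineq: "((a::real) + b)\<^sup>2 \<le> 2*a\<^sup>2 + 2*b\<^sup>2"
proof -
  have "0 \<le> (a - b)\<^sup>2" by simp
  then show ?thesis by (simp add: power2_diff power2_sum)
qed

context prob_space begin

lemma sqi_integrable: assumes "sqi M g" shows "integrable M g"
proof (rule Bochner_Integration.integrable_bound[of _ "\<lambda>x. 1 + (g x)\<^sup>2"])
  show "integrable M (\<lambda>x. 1 + (g x)\<^sup>2)" using assms unfolding sqi_def by auto
  show "g \<in> borel_measurable M" using assms unfolding sqi_def by auto
  show "AE x in M. norm (g x) \<le> norm (1 + (g x)\<^sup>2)"
    using abs_le_1_sq by (auto intro!: AE_I2)
qed

lemma sqi_mult: assumes "sqi M g" "sqi M h" shows "integrable M (\<lambda>x. g x * h x)"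
proof (rule Bochner_Integration.integrable_bound[of _ "\<lambda>x. (g x)\<^sup>2 + (h x)\<^sup>2"])
  show "integrable M (\<lambda>x. (g x)\<^sup>2 + (h x)\<^sup>2)" using assms unfolding sqi_def by auto
  show "(\<lambda>x. g x * h x) \<in> borel_measurable M" using assms unfolding sqi_def by auto
  show "AE x in M. norm (g x * h x) \<le> norm ((g x)\<^sup>2 + (h x)\<^sup>2)"
    using norm_mult_le by (auto intro!: AE_I2)
qed

lemma sqi_add: assumes "sqi M g" "sqi M h" shows "sqi M (\<lambda>x. g x + h x)"
  unfolding sqi_def
proof
  show "(\<lambda>x. g x + h x) \<in> borel_measurable M" using assms unfolding sqi_def by auto
  show "integrable M (\<lambda>x. (g x + h x)\<^sup>2)"
  proof (rule Bochner_Integration.integrable_bound[of _ "\<lambda>x. 2*(g x)\<^sup>2 + 2*(h x)\<^sup>2"])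
    show "integrable M (\<lambda>x. 2*(g x)\<^sup>2 + 2*(h x)\<^sup>2)" using assms unfolding sqi_def by auto
    show "(\<lambda>x. (g x + h x)\<^sup>2) \<in> borel_measurable M" using assms unfolding sqi_def by auto
    show "AE x in M. norm ((g x + h x)\<^sup>2) \<le> norm (2*(g x)\<^sup>2 + 2*(h x)\<^sup>2)"
      using sq_ineq by (auto intro!: AE_I2)
  qed
qed

lemma sqi_cmult: assumes "sqi M g" shows "sqi M (\<lambda>x. c * g x)"
  using assms unfolding sqi_def by (auto simp: power_mult_distrib)

lemma sqi_zero: "sqi M (\<lambda>x. 0)"
  unfolding sqi_def by auto

lemma sqi_diff: assumes "sqi M g" "sqi M h" shows "sqi M (\<lambda>x. g x - h x)"
  using sqi_add[OF assms(1) sqi_cmult[OF assms(2), of "-1"]] by simp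

lemma sqi_sum: assumes "\<And>i. i \<in> I \<Longrightarrow> sqi M (g i)" shows "sqi M (\<lambda>x. \<Sum>i\<in>I. g i x)"
  using assms
proof (induction I rule: infinite_finite_induct)
  case (infinite A) then show ?case by (simp add: sqi_zero)
next
  case empty then show ?case by (simp add: sqi_zero)
next
  case (insert i F) then show ?case using sqi_add[of "g i" "\<lambda>x. \<Sum>i\<in>F. g i x"] by simp
qed

lemma ip_add1: assumes "sqi M g" "sqi M h" "sqi M k"
  shows "ip M (\<lambda>x. g x + h x) k = ip M g k + ip M h k"
  unfolding ip_def using sqi_mult[OF assms(1,3)] sqi_mult[OF assms(2,3)]
  by (simp add: distrib_right)

lemma ip_diff1: assumes "sqi M g" "sqi M h" "sqi M k"
  shows "ip M (\<lambda>x. g x - h x) k = ip M g k - ip M h k"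
  unfolding ip_def using sqi_mult[OF assms(1,3)] sqi_mult[OF assms(2,3)]
  by (simp add: left_diff_distrib)

lemma ip_add2: assumes "sqi M g" "sqi M h" "sqi M k"
  shows "ip M k (\<lambda>x. g x + h x) = ip M k g + ip M k h"
  using ip_add1[OF assms] by (simp add: ip_sym)

lemma ip_diff2: assumes "sqi M g" "sqi M h" "sqi M k"
  shows "ip M k (\<lambda>x. g x - h x) = ip M k g - ip M k h"
  using ip_diff1[OF assms] by (simp add: ip_sym)

lemma ip_expand: assumes "sqi M g" "sqi M h"
  shows "ip M (\<lambda>x. g x - t * h x) (\<lambda>x. g x - t * h x) = ip M g g - 2*t*ip M g h + t\<^sup>2 * ip M h h"
proof -
  have th: "sqi M (\<lambda>x. t * h x)" by (rule sqi_cmult[OF assms(2)])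
  show ?thesis
    using assms th sqi_diff[OF assms(1) th]
    by (simp add: ip_diff1 ip_diff2 ip_cmult1 ip_cmult2 ip_sym[of M h g] power2_eq_square algebra_simps)
qed

lemma cauchy_schwarz: assumes "sqi M g" "sqi M h"
  shows "(ip M g h)\<^sup>2 \<le> ip M g g * ip M h h"
proof (rule quad_lemma)
  fix t
  have "0 \<le> ip M (\<lambda>x. g x - t * h x) (\<lambda>x. g x - t * h x)" by (rule ip_nonneg)
  then show "0 \<le> ip M g g - 2*t*ip M g h + t\<^sup>2 * ip M h h" using ip_expand[OF assms] by simp
qed

lemma abs_ip_le: assumes "sqi M g" "sqi M h"
  shows "\<bar>ip M g h\<bar> \<le> nrm M g * nrm M h"
proof -
  have "(ip M g h)\<^sup>2 \<le> (nrm M g * nrm M h)\<^sup>2"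
    using cauchy_schwarz[OF assms] by (simp add: power_mult_distrib nrm_sq)
  then have "\<bar>ip M g h\<bar> \<le> \<bar>nrm M g * nrm M h\<bar>" by (simp only: abs_le_square_iff)
  then show ?thesis using nrm_nonneg[of M g] nrm_nonneg[of M h] by simp
qed

lemma ip_zero_nrm: assumes "sqi M g" "sqi M h" "ip M h h = 0"
  shows "ip M g h = 0"
  using cauchy_schwarz[OF assms(1,2)] assms(3) by simp

definition "D g h = ip M (\<lambda>x. g x - h x) (\<lambda>x. g x - h x)"

lemma D_nonneg: "0 \<le> D g h" unfolding D_def by (rule ip_nonneg)

lemma D_sym: "D g h = D h g" unfolding D_def ip_def by (simp add: power2_commute[unfolded power2_eq_square])

lemma D_tri: assumes "sqi M a" "sqi M b" "sqi M c"
  shows "D a c \<le> 2 * D a b + 2 * D b c"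
proof -
  have i1: "integrable M (\<lambda>x. (a x - b x) * (a x - b x))"
    using sqi_mult[OF sqi_diff[OF assms(1,2)] sqi_diff[OF assms(1,2)]] .
  have i2: "integrable M (\<lambda>x. (b x - c x) * (b x - c x))"
    using sqi_mult[OF sqi_diff[OF assms(2,3)] sqi_diff[OF assms(2,3)]] .
  have "D a c \<le> integral\<^sup>L M (\<lambda>x. 2 * ((a x - b x) * (a x - b x)) + 2 * ((b x - c x) * (b x - c x)))"
    unfolding D_def ip_def
  proof (rule integral_mono_AE')
    show "integrable M (\<lambda>x. 2 * ((a x - b x) * (a x - b x)) + 2 * ((b x - c x) * (b x - c x)))"
      using i1 i2 by auto
    show "AE x in M. (a x - c x) * (a x - c x) \<le> 2 * ((a x - b x) * (a x - b x)) + 2 * ((b x - c x) * (b x - c x))"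
      using sq_ineq[of "a x - b x" "b x - c x" for x] by (auto intro!: AE_I2 simp: power2_eq_square)
    show "AE x in M. 0 \<le> 2 * ((a x - b x) * (a x - b x)) + 2 * ((b x - c x) * (b x - c x))"
      by (auto intro!: AE_I2)
  qed
  also have "\<dots> = 2 * D a b + 2 * D b c"
    unfolding D_def ip_def using i1 i2 by simp
  finally show ?thesis .
qed

lemma Hj_sqi: assumes "X j \<in> borel_measurable M" "g \<in> Hj M q X j" shows "sqi M g"
  using assms unfolding Hj_def sqi_def by auto

lemma Hj_zero: "(\<lambda>x. 0) \<in> Hj M q X j"
  unfolding Hj_def by (rule CollectI, rule exI[of _ "\<lambda>_. 0"]) auto

lemma Hj_add: assumes "X j \<in> borel_measurable M" "g \<in> Hj M q X j" "h \<in> Hj M q X j"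
  shows "(\<lambda>x. g x + h x) \<in> Hj M q X j"
proof -
  obtain g' where g': "g' \<in> borel_measurable borel" "g = (\<lambda>\<omega>. g' (X j \<omega>))"
      "integrable M (\<lambda>\<omega>. (g' (X j \<omega>))\<^sup>2)" "j < q \<longrightarrow> integral\<^sup>L M (\<lambda>\<omega>. g' (X j \<omega>)) = 0"
    using assms(2) unfolding Hj_def by auto
  obtain h' where h': "h' \<in> borel_measurable borel" "h = (\<lambda>\<omega>. h' (X j \<omega>))"
      "integrable M (\<lambda>\<omega>. (h' (X j \<omega>))\<^sup>2)" "j < q \<longrightarrow> integral\<^sup>L M (\<lambda>\<omega>. h' (X j \<omega>)) = 0"
    using assms(3) unfolding Hj_def by auto
  have sg: "sqi M g" and sh: "sqi M h" using Hj_sqi assms by auto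
  have "sqi M (\<lambda>x. g x + h x)" using sqi_add[OF sg sh] .
  moreover have "integrable M g" "integrable M h" using sqi_integrable sg sh by auto
  ultimately show ?thesis unfolding Hj_def sqi_def
    using g' h' by (intro CollectI exI[of _ "\<lambda>x. g' x + h' x"]) auto
qed

lemma Hj_cmult: assumes "g \<in> Hj M q X j"
  shows "(\<lambda>x. c * g x) \<in> Hj M q X j"
proof -
  obtain g' where g': "g' \<in> borel_measurable borel" "g = (\<lambda>\<omega>. g' (X j \<omega>))"
      "integrable M (\<lambda>\<omega>. (g' (X j \<omega>))\<^sup>2)" "j < q \<longrightarrow> integral\<^sup>L M (\<lambda>\<omega>. g' (X j \<omega>)) = 0"
    using assms unfolding Hj_def by auto
  show ?thesis unfolding Hj_def
    using g' by (intro CollectI exI[of _ "\<lambda>x. c * g' x"]) (auto simp: power_mult_distrib)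
qed

lemma Hj_diff: assumes "X j \<in> borel_measurable M" "g \<in> Hj M q X j" "h \<in> Hj M q X j"
  shows "(\<lambda>x. g x - h x) \<in> Hj M q X j"
  using Hj_add[OF assms(1,2) Hj_cmult[OF assms(3), of "-1"]] by simp

lemma HJ_sqi: assumes "\<forall>j\<in>J. X j \<in> borel_measurable M" "g \<in> HJ M q X J" shows "sqi M g"
  using assms unfolding HJ_def by (auto intro!: sqi_sum Hj_sqi)

lemma HJ_zero: "(\<lambda>x. 0) \<in> HJ M q X J"
  unfolding HJ_def by (rule CollectI, rule exI[of _ "\<lambda>_ _. 0"]) (auto simp: Hj_zero)

lemma HJ_add: assumes "\<forall>j\<in>J. X j \<in> borel_measurable M" "g \<in> HJ M q X J" "h \<in> HJ M q X J"
  shows "(\<lambda>x. g x + h x) \<in> HJ M q X J"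
proof -
  obtain G where G: "\<forall>j\<in>J. G j \<in> Hj M q X j" "g = (\<lambda>\<omega>. \<Sum>j\<in>J. G j \<omega>)"
    using assms(2) unfolding HJ_def by auto
  obtain H where H: "\<forall>j\<in>J. H j \<in> Hj M q X j" "h = (\<lambda>\<omega>. \<Sum>j\<in>J. H j \<omega>)"
    using assms(3) unfolding HJ_def by auto
  show ?thesis unfolding HJ_def
    using G H assms(1) by (intro CollectI exI[of _ "\<lambda>j x. G j x + H j x"]) (auto simp: Hj_add sum.distrib)
qed

lemma HJ_cmult: assumes "g \<in> HJ M q X J"
  shows "(\<lambda>x. c * g x) \<in> HJ M q X J"
proof -
  obtain G where G: "\<forall>j\<in>J. G j \<in> Hj M q X j" "g = (\<lambda>\<omega>. \<Sum>j\<in>J. G j \<omega>)"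
    using assms unfolding HJ_def by auto
  show ?thesis unfolding HJ_def
    using G by (intro CollectI exI[of _ "\<lambda>j x. c * G j x"]) (auto simp: Hj_cmult sum_distrib_left)
qed

lemma HJ_diff: assumes "\<forall>j\<in>J. X j \<in> borel_measurable M" "g \<in> HJ M q X J" "h \<in> HJ M q X J"
  shows "(\<lambda>x. g x - h x) \<in> HJ M q X J"
  using HJ_add[OF assms(1,2) HJ_cmult[OF assms(3), of "-1"]] by simp

lemma HJ_neg: assumes "g \<in> HJ M q X J"
  shows "(\<lambda>x. - g x) \<in> HJ M q X J"
  using HJ_cmult[OF assms, of "-1"] by simp

lemma HJ_empty: "HJ M q X {} = {\<lambda>x. 0}"
  unfolding HJ_def by auto

lemma HJ_insert: assumes "finite J" "j \<notin> J"
  shows "HJ M q X (insert j J) = {(\<lambda>x. a x + b x) | a b. a \<in> HJ M q X J \<and> b \<in> Hj M q X j}"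
proof (intro equalityI subsetI)
  fix g assume "g \<in> HJ M q X (insert j J)"
  then obtain G where G: "\<forall>i\<in>insert j J. G i \<in> Hj M q X i" "g = (\<lambda>\<omega>. \<Sum>i\<in>insert j J. G i \<omega>)"
    unfolding HJ_def by auto
  have "(\<lambda>\<omega>. \<Sum>i\<in>J. G i \<omega>) \<in> HJ M q X J" unfolding HJ_def using G(1) by auto
  moreover have "g = (\<lambda>x. (\<Sum>i\<in>J. G i x) + G j x)" using G(2) assms by (simp add: add.commute)
  ultimately show "g \<in> {(\<lambda>x. a x + b x) | a b. a \<in> HJ M q X J \<and> b \<in> Hj M q X j}"
    using G(1) by (intro CollectI exI[where x="\<lambda>\<omega>. \<Sum>i\<in>J. G i \<omega>"] exI[where x="G j"]) auto
next
  fix g assume "g \<in> {(\<lambda>x. a x + b x) | a b. a \<in> HJ M q X J \<and> b \<in> Hj M q X j}"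
  then obtain a b where ab: "a \<in> HJ M q X J" "b \<in> Hj M q X j" "g = (\<lambda>x. a x + b x)" by blast
  obtain G where G: "\<forall>i\<in>J. G i \<in> Hj M q X i" "a = (\<lambda>\<omega>. \<Sum>i\<in>J. G i \<omega>)"
    using ab(1) unfolding HJ_def by auto
  have "\<forall>i\<in>insert j J. (G(j := b)) i \<in> Hj M q X i" using G(1) ab(2) by auto
  moreover have "g = (\<lambda>\<omega>. \<Sum>i\<in>insert j J. (G(j := b)) i \<omega>)"
  proof
    fix x
    have "(\<Sum>i\<in>J. (G(j := b)) i x) = (\<Sum>i\<in>J. G i x)" using assms(2) by (intro sum.cong) auto
    then show "g x = (\<Sum>i\<in>insert j J. (G(j := b)) i x)" using assms ab(3) G(2) by (simp add: add.commute)
  qed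
  ultimately show "g \<in> HJ M q X (insert j J)" unfolding HJ_def by blast
qed

lemma nrm_tri: assumes "sqi M g" "sqi M h"
  shows "nrm M (\<lambda>x. g x + h x) \<le> nrm M g + nrm M h"
proof -
  have "(nrm M (\<lambda>x. g x + h x))\<^sup>2 = ip M g g + 2 * ip M g h + ip M h h"
    using assms sqi_add[OF assms] by (simp add: nrm_sq ip_add1 ip_add2 ip_sym[of M h g])
  also have "\<dots> \<le> (nrm M g)\<^sup>2 + 2 * (nrm M g * nrm M h) + (nrm M h)\<^sup>2"
    using abs_ip_le[OF assms] by (simp add: nrm_sq)
  also have "\<dots> = (nrm M g + nrm M h)\<^sup>2" by (simp add: power2_sum)
  finally show ?thesis using nrm_nonneg[of M g] nrm_nonneg[of M h]
    by (meson add_nonneg_nonneg power2_le_imp_le)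
qed

lemma sqrtD_tri: assumes "sqi M a" "sqi M b" "sqi M c"
  shows "sqrt (D a c) \<le> sqrt (D a b) + sqrt (D b c)"
proof -
  have "(\<lambda>x. a x - c x) = (\<lambda>x. (a x - b x) + (b x - c x))" by auto
  then have "sqrt (D a c) = nrm M (\<lambda>x. (a x - b x) + (b x - c x))" unfolding D_def nrm_def by simp
  also have "\<dots> \<le> nrm M (\<lambda>x. a x - b x) + nrm M (\<lambda>x. b x - c x)"
    by (rule nrm_tri[OF sqi_diff[OF assms(1,2)] sqi_diff[OF assms(2,3)]])
  finally show ?thesis unfolding D_def nrm_def .
qed

lemma parallelogram: assumes "sqi M f" "sqi M a" "sqi M b"
  shows "D a b = 2 * D f a + 2 * D f b - 4 * D f (\<lambda>x. (1/2) * (a x + b x))"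
proof -
  have i1: "integrable M (\<lambda>x. (f x - a x) * (f x - a x))"
    using sqi_mult[OF sqi_diff[OF assms(1,2)] sqi_diff[OF assms(1,2)]] .
  have i2: "integrable M (\<lambda>x. (f x - b x) * (f x - b x))"
    using sqi_mult[OF sqi_diff[OF assms(1,3)] sqi_diff[OF assms(1,3)]] .
  have sm: "sqi M (\<lambda>x. (1/2) * (a x + b x))" using sqi_cmult[OF sqi_add[OF assms(2,3)]] .
  have i3: "integrable M (\<lambda>x. (f x - (1/2) * (a x + b x)) * (f x - (1/2) * (a x + b x)))"
    using sqi_mult[OF sqi_diff[OF assms(1) sm] sqi_diff[OF assms(1) sm]] .
  have "D a b = integral\<^sup>L M (\<lambda>x. 2 * ((f x - a x) * (f x - a x)) + 2 * ((f x - b x) * (f x - b x))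
       - 4 * ((f x - (1/2) * (a x + b x)) * (f x - (1/2) * (a x + b x))))"
    unfolding D_def ip_def by (rule Bochner_Integration.integral_cong) (auto simp: algebra_simps)
  also have "\<dots> = 2 * D f a + 2 * D f b - 4 * D f (\<lambda>x. (1/2) * (a x + b x))"
    unfolding D_def ip_def using i1 i2 i3 by simp
  finally show ?thesis .
qed

definition "cplt V \<longleftrightarrow> (\<forall>u::nat \<Rightarrow> 'a \<Rightarrow> real. (\<forall>n. u n \<in> V) \<and> (\<forall>e>0. \<exists>N. \<forall>m\<ge>N. \<forall>n\<ge>N. D (u m) (u n) < e)
   \<longrightarrow> (\<exists>v\<in>V. (\<lambda>n. D (u n) v) \<longlonglongrightarrow> 0))"

lemma proj_exists:
  assumes Vs: "\<And>v. v \<in> V \<Longrightarrow> sqi M v"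
    and V0: "(\<lambda>x. 0) \<in> V"
    and Va: "\<And>g h. g \<in> V \<Longrightarrow> h \<in> V \<Longrightarrow> (\<lambda>x. g x + h x) \<in> V"
    and Vc: "\<And>g c. g \<in> V \<Longrightarrow> (\<lambda>x. c * g x) \<in> V"
    and Vcp: "cplt V"
    and f: "sqi M f"
  shows "\<exists>g\<in>V. \<forall>h\<in>V. ip M (\<lambda>\<omega>. f \<omega> - g \<omega>) h = 0"
proof -
  define S where "S = (\<lambda>v. D f v) ` V"
  define d where "d = Inf S"
  have Sne: "S \<noteq> {}" using V0 unfolding S_def by auto
  have Sbdd: "bdd_below S" unfolding S_def bdd_below_def using D_nonneg by auto
  have dle: "d \<le> D f v" if "v \<in> V" for v
    unfolding d_def S_def using that Sbdd[unfolded S_def] by (auto intro: cInf_lower)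
  have "\<exists>v\<in>V. D f v < d + 1/(Suc n)" for n
  proof -
    have "d < d + 1/(Suc n)" by simp
    from cInf_lessD[OF Sne this[unfolded d_def]] show ?thesis unfolding S_def d_def by auto
  qed
  then obtain v where vV: "\<And>n. v n \<in> V" and vd: "\<And>n. D f (v n) < d + 1/(Suc n)" by metis
  have vs: "sqi M (v n)" for n using Vs vV by auto
  have Dvv: "D (v m) (v n) \<le> 2/(Suc m) + 2/(Suc n)" for m n
  proof -
    have "(\<lambda>x. v m x + v n x) \<in> V" using Va vV by auto
    from Vc[OF this, of "1/2"] have "(\<lambda>x. (1/2) * (v m x + v n x)) \<in> V" .
    then have "d \<le> D f (\<lambda>x. (1/2) * (v m x + v n x))" by (rule dle)
    then show ?thesis using parallelogram[OF f vs vs, of m n] vd[of m] vd[of n] by simp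
  qed
  have "\<exists>N. \<forall>m\<ge>N. \<forall>n\<ge>N. D (v m) (v n) < e" if e: "e > 0" for e
  proof -
    obtain N where N: "4 / e < real N" using reals_Archimedean2 by blast
    have "D (v m) (v n) < e" if "m \<ge> N" "n \<ge> N" for m n
    proof -
      have "2/(Suc m) \<le> 2/(Suc N)" "2/(Suc n) \<le> 2/(Suc N)" using that by (auto intro!: divide_left_mono)
      moreover have "4/(Suc N) < e" using N e by (simp add: field_simps)
      ultimately show ?thesis using Dvv[of m n] by linarith
    qed
    then show ?thesis by blast
  qed
  then obtain g where gV: "g \<in> V" and gl: "(\<lambda>n. D (v n) g) \<longlonglongrightarrow> 0"
    using Vcp vV unfolding cplt_def by blast
  have gs: "sqi M g" using Vs gV by auto
  have "sqrt (D f g) \<le> sqrt d"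
  proof (rule LIMSEQ_le[of "\<lambda>n. sqrt (D f g)" _ "\<lambda>n. sqrt (d + 1/(Suc n)) + sqrt (D (v n) g)"])
    show "(\<lambda>n. sqrt (D f g)) \<longlonglongrightarrow> sqrt (D f g)" by simp
    have "(\<lambda>n. d + 1/(Suc n)) \<longlonglongrightarrow> d + 0"
      by (intro tendsto_add tendsto_const) (use LIMSEQ_inverse_real_of_nat in \<open>simp add: inverse_eq_divide\<close>)
    then have "(\<lambda>n. sqrt (d + 1/(Suc n)) + sqrt (D (v n) g)) \<longlonglongrightarrow> sqrt (d + 0) + sqrt 0"
      using tendsto_add[OF tendsto_real_sqrt[OF \<open>(\<lambda>n. d + 1/(Suc n)) \<longlonglongrightarrow> d + 0\<close>] tendsto_real_sqrt[OF gl]] by simp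
    then show "(\<lambda>n. sqrt (d + 1/(Suc n)) + sqrt (D (v n) g)) \<longlonglongrightarrow> sqrt d" by simp
    show "\<exists>N. \<forall>n\<ge>N. sqrt (D f g) \<le> sqrt (d + 1/(Suc n)) + sqrt (D (v n) g)"
    proof (intro exI allI impI)
      fix n
      have "sqrt (D f g) \<le> sqrt (D f (v n)) + sqrt (D (v n) g)" by (rule sqrtD_tri[OF f vs gs])
      moreover have "sqrt (D f (v n)) \<le> sqrt (d + 1/(Suc n))" using vd[of n] by simp
      ultimately show "sqrt (D f g) \<le> sqrt (d + 1/(Suc n)) + sqrt (D (v n) g)" by linarith
    qed
  qed
  then have Dfg: "D f g \<le> d" by simp
  have "ip M (\<lambda>\<omega>. f \<omega> - g \<omega>) h = 0" if hV: "h \<in> V" for h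
  proof -
    have hs: "sqi M h" using Vs hV by auto
    have ks: "sqi M (\<lambda>\<omega>. f \<omega> - g \<omega>)" using sqi_diff[OF f gs] .
    have "(ip M (\<lambda>\<omega>. f \<omega> - g \<omega>) h)\<^sup>2 \<le> 0 * ip M h h"
    proof (rule quad_lemma)
      fix t
      have "(\<lambda>x. t * h x) \<in> V" using Vc hV by auto
      from Va[OF gV this] have "(\<lambda>x. g x + t * h x) \<in> V" .
      then have "D f g \<le> D f (\<lambda>x. g x + t * h x)" using Dfg dle by fastforce
      also have "D f (\<lambda>x. g x + t * h x) = ip M (\<lambda>x. (f x - g x) - t * h x) (\<lambda>x. (f x - g x) - t * h x)"
        unfolding D_def by (simp add: algebra_simps)
      also have "\<dots> = D f g - 2*t*ip M (\<lambda>\<omega>. f \<omega> - g \<omega>) h + t\<^sup>2 * ip M h h"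
        using ip_expand[OF ks hs, of t] unfolding D_def by simp
      finally show "0 \<le> 0 - 2*t*ip M (\<lambda>\<omega>. f \<omega> - g \<omega>) h + t\<^sup>2 * ip M h h" by simp
    qed
    then show ?thesis by simp
  qed
  then show ?thesis using gV by blast
qed

lemma L1_le: assumes "sqi M w" shows "integral\<^sup>L M (\<lambda>x. \<bar>w x\<bar>) \<le> sqrt (ip M w w)"
proof -
  have s1: "sqi M (\<lambda>x. \<bar>w x\<bar>)" using assms unfolding sqi_def by auto
  have s2: "sqi M (\<lambda>x. 1)" unfolding sqi_def by auto
  have "(ip M (\<lambda>x. \<bar>w x\<bar>) (\<lambda>x. 1))\<^sup>2 \<le> ip M (\<lambda>x. \<bar>w x\<bar>) (\<lambda>x. \<bar>w x\<bar>) * ip M (\<lambda>x. 1) (\<lambda>x. 1)"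
    by (rule cauchy_schwarz[OF s1 s2])
  also have "ip M (\<lambda>x. \<bar>w x\<bar>) (\<lambda>x. \<bar>w x\<bar>) = ip M w w" unfolding ip_def by (simp add: abs_mult_self_eq)
  also have "ip M (\<lambda>x. 1) (\<lambda>x. 1) = 1" unfolding ip_def by (simp add: prob_space)
  finally have "(integral\<^sup>L M (\<lambda>x. \<bar>w x\<bar>))\<^sup>2 \<le> ip M w w" unfolding ip_def by simp
  then show ?thesis by (simp add: real_le_rsqrt)
qed

lemma eps_zero: assumes "\<And>e. e > 0 \<Longrightarrow> \<bar>a::real\<bar> \<le> e" shows "a = 0"
  using assms[of "\<bar>a\<bar>/2"] by (cases "a = 0") auto

lemma Hj_cplt: assumes Xm: "X j \<in> borel_measurable M" shows "cplt (Hj M q X j)"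
  unfolding cplt_def
proof (intro allI impI, elim conjE)
  fix u :: "nat \<Rightarrow> 'a \<Rightarrow> real" assume uV: "\<forall>n. u n \<in> Hj M q X j"
    and uC: "\<forall>e>0. \<exists>N. \<forall>m\<ge>N. \<forall>n\<ge>N. D (u m) (u n) < e"
  have "\<forall>n. \<exists>h. h \<in> borel_measurable borel \<and> u n = (\<lambda>\<omega>. h (X j \<omega>)) \<and> (j < q \<longrightarrow> integral\<^sup>L M (\<lambda>\<omega>. h (X j \<omega>)) = 0)"
    using uV unfolding Hj_def by blast
  from choice[OF this] obtain hh where hh: "\<And>n. hh n \<in> borel_measurable borel"
    "\<And>n. u n = (\<lambda>\<omega>. hh n (X j \<omega>))" "\<And>n. j < q \<Longrightarrow> integral\<^sup>L M (\<lambda>\<omega>. hh n (X j \<omega>)) = 0"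
    by blast
  have us: "sqi M (u n)" for n using Hj_sqi[of X j, OF Xm] uV by auto
  have um[measurable]: "u n \<in> borel_measurable M" for n using us unfolding sqi_def by auto
  have uint: "integrable M (u n)" for n using sqi_integrable us by auto
  have "\<exists>r. strict_mono r \<and> (AE x in M. Cauchy (\<lambda>i. u (r i) x))"
  proof -
    have "\<exists>N. \<forall>i\<ge>N. \<forall>k\<ge>N. LINT x|M. norm (u i x - u k x) < e" if e: "e > 0" for e
    proof -
      have "e\<^sup>2 > 0" using e by simp
      then obtain N where N: "\<forall>m\<ge>N. \<forall>n\<ge>N. D (u m) (u n) < e\<^sup>2" using uC by blast
      have "LINT x|M. norm (u i x - u k x) < e" if "i \<ge> N" "k \<ge> N" for i k
      proof -
        have "LINT x|M. norm (u i x - u k x) \<le> sqrt (D (u i) (u k))"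
          unfolding D_def using L1_le[OF sqi_diff[OF us us]] by simp
        also have "\<dots> < sqrt (e\<^sup>2)" using N that by (simp del: real_sqrt_abs)
        finally show ?thesis using e by simp
      qed
      then show ?thesis by blast
    qed
    from cauchy_L1_AE_cauchy_subseq[OF uint this] show ?thesis by metis
  qed
  then obtain r where r: "strict_mono r" and rC: "AE x in M. Cauchy (\<lambda>i. u (r i) x)" by blast
  define hl where "hl = (\<lambda>y. lim (\<lambda>i. hh (r i) y))"
  have hlm: "hl \<in> borel_measurable borel" unfolding hl_def using hh(1) by measurable
  define v where "v = (\<lambda>\<omega>. hl (X j \<omega>))"
  have vm[measurable]: "v \<in> borel_measurable M" unfolding v_def using hlm Xm by measurable
  have vlim: "AE x in M. (\<lambda>i. u (r i) x) \<longlonglongrightarrow> v x"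
    using rC
  proof (rule AE_mp, intro AE_I2 impI)
    fix x assume "Cauchy (\<lambda>i. u (r i) x)"
    then have "Cauchy (\<lambda>i. hh (r i) (X j x))" by (simp add: hh(2))
    then have "convergent (\<lambda>i. hh (r i) (X j x))" by (simp add: Cauchy_convergent_iff)
    then show "(\<lambda>i. u (r i) x) \<longlonglongrightarrow> v x" unfolding v_def hl_def using hh(2)
      by (simp add: convergent_LIMSEQ_iff)
  qed
  have key: "\<exists>N. \<forall>n\<ge>N. integrable M (\<lambda>x. (u n x - v x) * (u n x - v x)) \<and> D (u n) v \<le> e"
    if e: "e > 0" for e
  proof -
    obtain N where N: "\<forall>m\<ge>N. \<forall>n\<ge>N. D (u m) (u n) < e" using uC e by auto
    have "integrable M (\<lambda>x. (u n x - v x) * (u n x - v x)) \<and> D (u n) v \<le> e" if n: "n \<ge> N" for n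
    proof -
      have "(\<integral>\<^sup>+ x. ennreal ((u n x - v x) * (u n x - v x)) \<partial>M)
          = (\<integral>\<^sup>+ x. liminf (\<lambda>i. ennreal ((u n x - u (r i) x) * (u n x - u (r i) x))) \<partial>M)"
      proof (rule nn_integral_cong_AE)
        show "AE x in M. ennreal ((u n x - v x) * (u n x - v x)) = liminf (\<lambda>i. ennreal ((u n x - u (r i) x) * (u n x - u (r i) x)))"
          using vlim
        proof (rule AE_mp, intro AE_I2 impI)
          fix x assume "(\<lambda>i. u (r i) x) \<longlonglongrightarrow> v x"
          then have "(\<lambda>i. ennreal ((u n x - u (r i) x) * (u n x - u (r i) x))) \<longlonglongrightarrow> ennreal ((u n x - v x) * (u n x - v x))"
            by (intro tendsto_ennrealI tendsto_mult tendsto_diff tendsto_const)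
          then show "ennreal ((u n x - v x) * (u n x - v x)) = liminf (\<lambda>i. ennreal ((u n x - u (r i) x) * (u n x - u (r i) x)))"
            using lim_imp_Liminf[OF trivial_limit_sequentially] by metis
        qed
      qed
      also have "\<dots> \<le> liminf (\<lambda>i. (\<integral>\<^sup>+ x. ennreal ((u n x - u (r i) x) * (u n x - u (r i) x)) \<partial>M))"
        by (rule nn_integral_liminf) measurable
      also have "\<dots> = liminf (\<lambda>i. ennreal (D (u n) (u (r i))))"
      proof -
        have "(\<integral>\<^sup>+ x. ennreal ((u n x - u (r i) x) * (u n x - u (r i) x)) \<partial>M) = ennreal (D (u n) (u (r i)))" for i
          unfolding D_def ip_def
          using sqi_mult[OF sqi_diff[OF us us] sqi_diff[OF us us], of n "r i" n "r i"]
          by (intro nn_integral_eq_integral) auto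
        then show ?thesis by simp
      qed
      also have "\<dots> \<le> limsup (\<lambda>i. ennreal (D (u n) (u (r i))))"
        by (rule Liminf_le_Limsup) simp
      also have "\<dots> \<le> ennreal e"
      proof (rule Limsup_bounded)
        show "\<forall>\<^sub>F i in sequentially. ennreal (D (u n) (u (r i))) \<le> ennreal e"
        proof (rule eventually_sequentiallyI[of N])
          fix i assume "N \<le> i"
          then have "N \<le> r i" using seq_suble[OF r, of i] by simp
          then have "D (u n) (u (r i)) < e" using N n by blast
          then show "ennreal (D (u n) (u (r i))) \<le> ennreal e" by (intro ennreal_leI) simp
        qed
      qed
      finally have fin: "(\<integral>\<^sup>+ x. ennreal ((u n x - v x) * (u n x - v x)) \<partial>M) \<le> ennreal e" .
      have int: "integrable M (\<lambda>x. (u n x - v x) * (u n x - v x))"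
        using fin by (intro integrableI_nonneg) (auto simp: top.not_eq_extremum intro: le_less_trans)
      have "ennreal (D (u n) v) \<le> ennreal e"
        using fin unfolding D_def ip_def by (subst nn_integral_eq_integral[symmetric]) (use int in auto)
      then have "D (u n) v \<le> e" using e by simp
      with int show ?thesis by simp
    qed
    then show ?thesis by blast
  qed
  obtain N1 where "\<forall>n\<ge>N1. integrable M (\<lambda>x. (u n x - v x) * (u n x - v x)) \<and> D (u n) v \<le> 1"
    using key[of 1] by auto
  then have i1: "integrable M (\<lambda>x. (u N1 x - v x) * (u N1 x - v x))" by auto
  have ws: "sqi M (\<lambda>x. u N1 x - v x)" unfolding sqi_def using i1 by (simp add: power2_eq_square)
  have vs: "sqi M v" using sqi_diff[OF us ws, of N1] by simp
  have Dl: "\<exists>N. \<forall>n\<ge>N. D (u n) v \<le> e" if "e > 0" for e using key[OF that] by blast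
  have vH: "v \<in> Hj M q X j"
  proof -
    have "integral\<^sup>L M v = 0" if jq: "j < q"
    proof (rule eps_zero)
      fix e :: real assume e: "e > 0"
      have "e\<^sup>2 > 0" using e by simp
      then obtain N where N: "\<forall>n\<ge>N. D (u n) v \<le> e\<^sup>2" using Dl by blast
      have u0: "integral\<^sup>L M (u N) = 0" using hh(2,3)[of N] jq by simp
      have "\<bar>integral\<^sup>L M v\<bar> = \<bar>integral\<^sup>L M (\<lambda>x. u N x - v x)\<bar>"
        using u0 uint[of N] sqi_integrable[OF vs] by simp
      also have "\<dots> \<le> integral\<^sup>L M (\<lambda>x. \<bar>u N x - v x\<bar>)" using integral_norm_bound[of M "\<lambda>x. u N x - v x"] by simp
      also have "\<dots> \<le> sqrt (D (u N) v)" unfolding D_def by (rule L1_le[OF sqi_diff[OF us vs]])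
      also have "\<dots> \<le> sqrt (e\<^sup>2)" using N by (simp del: real_sqrt_abs)
      finally show "\<bar>integral\<^sup>L M v\<bar> \<le> e" using e by simp
    qed
    then show ?thesis unfolding Hj_def
      using hlm vs unfolding sqi_def v_def by (intro CollectI exI[of _ hl]) auto
  qed
  have "(\<lambda>n. D (u n) v) \<longlonglongrightarrow> 0"
  proof (rule LIMSEQ_I)
    fix e :: real assume e: "0 < e"
    obtain N where N: "\<forall>n\<ge>N. D (u n) v \<le> e/2" using Dl[of "e/2"] e by auto
    show "\<exists>N. \<forall>n\<ge>N. norm (D (u n) v - 0) < e"
      using N D_nonneg e by (intro exI[of _ N]) force
  qed
  with vH show "\<exists>v\<in>Hj M q X j. (\<lambda>n. D (u n) v) \<longlonglongrightarrow> 0" by blast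
qed

lemma Hj_in_HJ: assumes "b \<in> Hj M q X j" shows "b \<in> HJ M q X {j}"
  unfolding HJ_def using assms by (intro CollectI exI[of _ "\<lambda>_. b"]) auto

lemma nrm_neg: "nrm M (\<lambda>x. - g x) = nrm M g"
  unfolding nrm_def ip_def by simp

lemma angle:
  assumes Xm: "\<forall>j\<in>{1..q}. X j \<in> borel_measurable M"
    and AB: "A \<subseteq> {1..q}" "B \<subseteq> {1..q}" "A \<inter> B = {}" "card A \<le> qs" "card B \<le> qs"
    and ab: "a \<in> HJ M q X A" "b \<in> HJ M q X B"
  shows "\<bar>ip M a b\<bar> \<le> max (rho M q X qs) 0 * nrm M a * nrm M b"
proof -
  define S where "S = {ip M h1 h2 / (nrm M h1 * nrm M h2) | J1 J2 h1 h2.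
       J1 \<subseteq> {1..q} \<and> J2 \<subseteq> {1..q} \<and> J1 \<inter> J2 = {} \<and> card J1 \<le> qs \<and> card J2 \<le> qs \<and>
       h1 \<in> HJ M q X J1 \<and> h2 \<in> HJ M q X J2 \<and> nrm M h1 > 0 \<and> nrm M h2 > 0}"
  have rho_eq: "rho M q X qs = (if S = {} then 0 else Sup S)" unfolding rho_def S_def Let_def ..
  have as: "sqi M a" using HJ_sqi[OF _ ab(1)] Xm AB(1) by blast
  have bs: "sqi M b" using HJ_sqi[OF _ ab(2)] Xm AB(2) by blast
  have Sbdd: "bdd_above S" unfolding bdd_above_def
  proof (intro exI[of _ 1] ballI)
    fix x assume "x \<in> S"
    then obtain J1 J2 h1 h2 where h: "J1 \<subseteq> {1..q}" "J2 \<subseteq> {1..q}" "h1 \<in> HJ M q X J1" "h2 \<in> HJ M q X J2"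
      "nrm M h1 > 0" "nrm M h2 > 0" "x = ip M h1 h2 / (nrm M h1 * nrm M h2)" unfolding S_def by blast
    have "sqi M h1" using HJ_sqi[OF _ h(3)] Xm h(1) by blast
    moreover have "sqi M h2" using HJ_sqi[OF _ h(4)] Xm h(2) by blast
    ultimately have "ip M h1 h2 \<le> nrm M h1 * nrm M h2" using abs_ip_le by fastforce
    then show "x \<le> 1" using h(5,6,7) by (simp add: divide_le_eq_1)
  qed
  show ?thesis
  proof (cases "nrm M a > 0 \<and> nrm M b > 0")
    case True
    have p: "nrm M a * nrm M b > 0" using True by simp
    have e1: "ip M a b / (nrm M a * nrm M b) \<in> S" unfolding S_def using AB ab True by blast
    have e2: "ip M (\<lambda>x. - a x) b / (nrm M (\<lambda>x. - a x) * nrm M b) \<in> S" unfolding S_def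
      using AB HJ_neg[OF ab(1)] ab(2) True nrm_neg[of a] by (intro CollectI exI[of _ A] exI[of _ B] exI[of _ "\<lambda>x. - a x"] exI[of _ b]) auto
    have Sne: "S \<noteq> {}" using e1 by auto
    have "ip M a b / (nrm M a * nrm M b) \<le> rho M q X qs" using cSup_upper[OF e1 Sbdd] rho_eq Sne by simp
    then have l1: "ip M a b \<le> rho M q X qs * (nrm M a * nrm M b)" using p by (simp add: divide_le_eq)
    have "ip M (\<lambda>x. - a x) b / (nrm M a * nrm M b) \<le> rho M q X qs"
      using cSup_upper[OF e2 Sbdd] rho_eq Sne nrm_neg[of a] by simp
    moreover have "ip M (\<lambda>x. - a x) b = - ip M a b" using ip_cmult1[of M "-1" a b] by simp
    ultimately have "- (ip M a b / (nrm M a * nrm M b)) \<le> rho M q X qs" by simp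
    then have l2: "- ip M a b \<le> rho M q X qs * (nrm M a * nrm M b)"
      by (metis minus_divide_left pos_divide_le_eq[OF p])
    have "rho M q X qs * (nrm M a * nrm M b) \<le> max (rho M q X qs) 0 * (nrm M a * nrm M b)"
      using p by (intro mult_right_mono) auto
    then show ?thesis using l1 l2 by (simp add: mult.assoc)
  next
    case False
    then have "nrm M a = 0 \<or> nrm M b = 0" using nrm_nonneg[of M a] nrm_nonneg[of M b] by auto
    then show ?thesis using abs_ip_le[OF as bs] by auto
  qed
qed

lemma sum_lower:
  assumes Xm: "\<forall>j\<in>{1..q}. X j \<in> borel_measurable M"
    and AB: "A \<subseteq> {1..q}" "B \<subseteq> {1..q}" "A \<inter> B = {}" "card A \<le> qs" "card B \<le> qs"
    and ab: "a \<in> HJ M q X A" "b \<in> HJ M q X B"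
  shows "(1 - max (rho M q X qs) 0) * (ip M a a + ip M b b) \<le> ip M (\<lambda>x. a x + b x) (\<lambda>x. a x + b x)"
proof -
  define r where "r = max (rho M q X qs) 0"
  have as: "sqi M a" using HJ_sqi[OF _ ab(1)] Xm AB(1) by blast
  have bs: "sqi M b" using HJ_sqi[OF _ ab(2)] Xm AB(2) by blast
  have ang: "\<bar>ip M a b\<bar> \<le> r * nrm M a * nrm M b" unfolding r_def by (rule angle[OF Xm AB ab])
  have r0: "r \<ge> 0" unfolding r_def by simp
  have "2 * (nrm M a * nrm M b) \<le> ip M a a + ip M b b"
    using two_ab[of "nrm M a" "nrm M b"] nrm_nonneg[of M a] nrm_nonneg[of M b] by (simp add: nrm_sq)
  then have "r * (2 * (nrm M a * nrm M b)) \<le> r * (ip M a a + ip M b b)" using r0 by (rule mult_left_mono)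
  moreover have "ip M (\<lambda>x. a x + b x) (\<lambda>x. a x + b x) = ip M a a + 2 * ip M a b + ip M b b"
    using as bs sqi_add[OF as bs] by (simp add: ip_add1 ip_add2 ip_sym[of M b a])
  ultimately show ?thesis using ang unfolding r_def[symmetric] by (simp add: algebra_simps)
qed

lemma cplt_insert:
  assumes Xm: "\<forall>j\<in>{1..q}. X j \<in> borel_measurable M"
    and rho1: "rho M q X qs < 1"
    and A: "A \<subseteq> {1..q}" "j \<in> {1..q}" "j \<notin> A" "card (insert j A) \<le> qs"
    and cA: "cplt (HJ M q X A)"
  shows "cplt (HJ M q X (insert j A))"
  unfolding cplt_def
proof (intro allI impI, elim conjE)
  have fA: "finite A" using A(1) finite_subset by blast
  have cardA: "card A \<le> qs" using A(4) card_insert_le[of A j] by linarith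
  have cardj: "card {j} \<le> qs" using A(3,4) fA by simp
  have XA: "\<forall>i\<in>A. X i \<in> borel_measurable M" using Xm A(1) by blast
  have Xj: "X j \<in> borel_measurable M" using Xm A(2) by blast
  define c where "c = 1 - max (rho M q X qs) 0"
  have c0: "c > 0" unfolding c_def using rho1 by simp
  have low: "c * (ip M a a + ip M b b) \<le> ip M (\<lambda>x. a x + b x) (\<lambda>x. a x + b x)"
    if "a \<in> HJ M q X A" "b \<in> Hj M q X j" for a b
    unfolding c_def using sum_lower[OF Xm A(1) _ _ cardA cardj that(1) Hj_in_HJ[OF that(2)]] A by auto
  fix u :: "nat \<Rightarrow> 'a \<Rightarrow> real" assume uV: "\<forall>n. u n \<in> HJ M q X (insert j A)"
    and uC: "\<forall>e>0. \<exists>N. \<forall>m\<ge>N. \<forall>n\<ge>N. D (u m) (u n) < e"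
  have "\<forall>n. \<exists>ab. fst ab \<in> HJ M q X A \<and> snd ab \<in> Hj M q X j \<and> u n = (\<lambda>x. fst ab x + snd ab x)"
    using uV unfolding HJ_insert[OF fA A(3)] by force
  from choice[OF this] obtain ab where ab: "\<And>n. fst (ab n) \<in> HJ M q X A" "\<And>n. snd (ab n) \<in> Hj M q X j"
    "\<And>n. u n = (\<lambda>x. fst (ab n) x + snd (ab n) x)" by blast
  define a where "a = (\<lambda>n. fst (ab n))"
  define b where "b = (\<lambda>n. snd (ab n))"
  have aH: "a n \<in> HJ M q X A" and bH: "b n \<in> Hj M q X j" and ueq: "u n = (\<lambda>x. a n x + b n x)" for n
    using ab unfolding a_def b_def by auto
  have as: "sqi M (a n)" for n using HJ_sqi[OF XA aH] .
  have bs: "sqi M (b n)" for n using Hj_sqi[of X j, OF Xj bH] .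
  have Dab: "c * (D (a m) (a n) + D (b m) (b n)) \<le> D (u m) (u n)" for m n
  proof -
    have "(\<lambda>x. u m x - u n x) = (\<lambda>x. (a m x - a n x) + (b m x - b n x))" unfolding ueq by auto
    then have "D (u m) (u n) = ip M (\<lambda>x. (a m x - a n x) + (b m x - b n x)) (\<lambda>x. (a m x - a n x) + (b m x - b n x))"
      unfolding D_def by simp
    moreover have "c * (D (a m) (a n) + D (b m) (b n)) \<le> \<dots>"
      unfolding D_def by (rule low[OF HJ_diff[OF XA aH aH] Hj_diff[OF Xj bH bH]])
    ultimately show ?thesis by simp
  qed
  have Da: "D (a m) (a n) \<le> D (u m) (u n) / c" and Db: "D (b m) (b n) \<le> D (u m) (u n) / c" for m n
  proof -
    have p1: "0 \<le> c * D (a m) (a n)" using c0 D_nonneg[of "a m" "a n"] by simp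
    have p2: "0 \<le> c * D (b m) (b n)" using c0 D_nonneg[of "b m" "b n"] by simp
    have "c * D (a m) (a n) \<le> D (u m) (u n)" "c * D (b m) (b n) \<le> D (u m) (u n)"
      using Dab[of m n] p1 p2 by (simp_all add: distrib_left)
    then show "D (a m) (a n) \<le> D (u m) (u n) / c" "D (b m) (b n) \<le> D (u m) (u n) / c"
      using c0 by (simp_all add: pos_le_divide_eq mult.commute)
  qed
  have aC: "\<exists>N. \<forall>m\<ge>N. \<forall>n\<ge>N. D (a m) (a n) < e" and bC: "\<exists>N. \<forall>m\<ge>N. \<forall>n\<ge>N. D (b m) (b n) < e"
    if e: "e > 0" for e
  proof -
    have "e * c > 0" using e c0 by simp
    then obtain N where N: "\<forall>m\<ge>N. \<forall>n\<ge>N. D (u m) (u n) < e * c" using uC by blast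
    have "D (u m) (u n) / c < e" if "m \<ge> N" "n \<ge> N" for m n using N that c0 by (simp add: divide_less_eq)
    then show "\<exists>N. \<forall>m\<ge>N. \<forall>n\<ge>N. D (a m) (a n) < e" "\<exists>N. \<forall>m\<ge>N. \<forall>n\<ge>N. D (b m) (b n) < e"
      using Da Db by (meson order_le_less_trans)+
  qed
  obtain a' where a'H: "a' \<in> HJ M q X A" and a'l: "(\<lambda>n. D (a n) a') \<longlonglongrightarrow> 0"
    using cA aH aC unfolding cplt_def by blast
  obtain b' where b'H: "b' \<in> Hj M q X j" and b'l: "(\<lambda>n. D (b n) b') \<longlonglongrightarrow> 0"
    using Hj_cplt[of X j, OF Xj] bH bC unfolding cplt_def by blast
  have a's: "sqi M a'" using HJ_sqi[OF XA a'H] .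
  have b's: "sqi M b'" using Hj_sqi[of X j, OF Xj b'H] .
  define w where "w = (\<lambda>x. a' x + b' x)"
  have wH: "w \<in> HJ M q X (insert j A)" unfolding HJ_insert[OF fA A(3)] w_def using a'H b'H by blast
  have Duw: "D (u n) w \<le> 2 * D (a n) a' + 2 * D (b n) b'" for n
  proof -
    have m: "sqi M (\<lambda>x. a' x + b n x)" using sqi_add[OF a's bs] .
    have us: "sqi M (u n)" unfolding ueq using sqi_add[OF as bs] .
    have ws: "sqi M w" unfolding w_def using sqi_add[OF a's b's] .
    have "D (u n) w \<le> 2 * D (u n) (\<lambda>x. a' x + b n x) + 2 * D (\<lambda>x. a' x + b n x) w"
      by (rule D_tri[OF us m ws])
    also have "D (u n) (\<lambda>x. a' x + b n x) = D (a n) a'" unfolding D_def ueq by (simp add: algebra_simps)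
    also have "D (\<lambda>x. a' x + b n x) w = D (b n) b'" unfolding D_def w_def by (simp add: algebra_simps)
    finally show ?thesis .
  qed
  have "(\<lambda>n. 2 * D (a n) a' + 2 * D (b n) b') \<longlonglongrightarrow> 2 * 0 + 2 * 0"
    by (intro tendsto_add tendsto_mult tendsto_const a'l b'l)
  then have lim2: "(\<lambda>n. 2 * D (a n) a' + 2 * D (b n) b') \<longlonglongrightarrow> 0" by simp
  have "(\<lambda>n. D (u n) w) \<longlonglongrightarrow> 0"
  proof (rule tendsto_sandwich[of "\<lambda>n. 0" _ _ "\<lambda>n. 2 * D (a n) a' + 2 * D (b n) b'"])
    show "\<forall>\<^sub>F n in sequentially. 0 \<le> D (u n) w" by (intro always_eventually allI D_nonneg)
    show "\<forall>\<^sub>F n in sequentially. D (u n) w \<le> 2 * D (a n) a' + 2 * D (b n) b'"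
      by (intro always_eventually allI Duw)
    show "(\<lambda>n. 0) \<longlonglongrightarrow> (0::real)" by (rule tendsto_const)
    show "(\<lambda>n. 2 * D (a n) a' + 2 * D (b n) b') \<longlonglongrightarrow> 0" by (rule lim2)
  qed
  with wH show "\<exists>v\<in>HJ M q X (insert j A). (\<lambda>n. D (u n) v) \<longlonglongrightarrow> 0" by blast
qed

lemma cplt_HJ:
  assumes Xm: "\<forall>j\<in>{1..q}. X j \<in> borel_measurable M"
    and rho1: "rho M q X qs < 1"
    and J: "J \<subseteq> {1..q}" "card J \<le> qs"
  shows "cplt (HJ M q X J)"
proof -
  have fJ: "finite J" using J(1) finite_subset by blast
  have "J \<subseteq> {1..q} \<longrightarrow> card J \<le> qs \<longrightarrow> cplt (HJ M q X J)"
    using fJ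
  proof (induction J rule: finite_induct)
    case empty
    have "cplt (HJ M q X {})" unfolding cplt_def HJ_empty
    proof (intro impI allI, elim conjE)
      fix u :: "nat \<Rightarrow> 'a \<Rightarrow> real" assume "\<forall>n. u n \<in> {\<lambda>x. 0}"
      then have "u n = (\<lambda>x. 0)" for n by blast
      then show "\<exists>v\<in>{\<lambda>x. 0}. (\<lambda>n. D (u n) v) \<longlonglongrightarrow> 0" by (simp add: D_def ip_def)
    qed
    then show ?case by blast
  next
    case (insert j A)
    show ?case
    proof (intro impI)
      assume a: "insert j A \<subseteq> {1..q}" "card (insert j A) \<le> qs"
      then have "card A \<le> qs" using insert(1,2) by simp
      then have "cplt (HJ M q X A)" using insert a by auto
      then show "cplt (HJ M q X (insert j A))" using cplt_insert[OF Xm rho1 _ _ insert(2) a(2)] a by auto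
    qed
  qed
  then show ?thesis using J by auto
qed

lemma pyth: assumes "sqi M f" "sqi M g" "ip M (\<lambda>\<omega>. f \<omega> - g \<omega>) g = 0"
  shows "ip M (\<lambda>\<omega>. f \<omega> - g \<omega>) (\<lambda>\<omega>. f \<omega> - g \<omega>) = ip M f f - ip M g g"
proof -
  have d: "sqi M (\<lambda>\<omega>. f \<omega> - g \<omega>)" using sqi_diff[OF assms(1,2)] .
  have "ip M (\<lambda>\<omega>. f \<omega> - g \<omega>) (\<lambda>\<omega>. f \<omega> - g \<omega>) = ip M (\<lambda>\<omega>. f \<omega> - g \<omega>) f - ip M (\<lambda>\<omega>. f \<omega> - g \<omega>) g"
    using ip_diff2[OF assms(1,2) d] .
  also have "\<dots> = ip M (\<lambda>\<omega>. f \<omega> - g \<omega>) f" using assms(3) by simp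
  also have "\<dots> = ip M f f - ip M g f" using ip_diff1[OF assms(1,2,1)] .
  also have "ip M g f = ip M f g" by (rule ip_sym)
  also have "ip M f g = ip M g g" using ip_diff1[OF assms(1,2,2)] assms(3) by simp
  finally show ?thesis .
qed

lemma sum_zero_ip:
  assumes "finite I" "\<And>i. i \<in> I \<Longrightarrow> sqi M (g i)" "\<And>i. i \<in> I \<Longrightarrow> ip M (g i) (g i) = 0"
  shows "ip M (\<lambda>x. \<Sum>i\<in>I. g i x) (\<lambda>x. \<Sum>i\<in>I. g i x) = 0"
  using assms
proof (induction I rule: finite_induct)
  case empty then show ?case by (simp add: ip_def)
next
  case (insert i F)
  let ?S = "\<lambda>x. \<Sum>i\<in>F. g i x"
  have gs: "sqi M (g i)" using insert by auto
  have Ss: "sqi M ?S" using insert by (intro sqi_sum) auto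
  have SS: "ip M ?S ?S = 0" using insert by auto
  have gg: "ip M (g i) (g i) = 0" using insert by auto
  have "(\<lambda>x. \<Sum>i\<in>insert i F. g i x) = (\<lambda>x. g i x + ?S x)" using insert by simp
  moreover have "ip M (\<lambda>x. g i x + ?S x) (\<lambda>x. g i x + ?S x) = ip M (g i) (g i) + 2 * ip M (g i) ?S + ip M ?S ?S"
    using gs Ss sqi_add[OF gs Ss] by (simp add: ip_add1 ip_add2 ip_sym[of M ?S "g i"])
  moreover have "ip M (g i) ?S = 0" using ip_zero_nrm[OF gs Ss SS] .
  ultimately show ?case using SS gg by simp
qed

end

theorem proposition1:
  fixes M :: "'a measure" and q qs :: nat and X :: "nat \<Rightarrow> 'a \<Rightarrow> real"
    and fj :: "nat \<Rightarrow> real \<Rightarrow> real" and J :: "nat set"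
  defines "f \<equiv> (\<lambda>\<omega>. \<Sum>j\<in>{1..q}. fj j (X j \<omega>))"
  assumes "prob_space M"
    and "q \<ge> 1"
    and "\<forall>j\<in>{1..q}. X j \<in> borel_measurable M"
    and "\<forall>j\<in>{1..q}. fj j \<in> borel_measurable borel \<and> integrable M (\<lambda>\<omega>. (fj j (X j \<omega>))\<^sup>2)"
    and "\<forall>j\<in>{1..q}. j < q \<longrightarrow> integral\<^sup>L M (\<lambda>\<omega>. fj j (X j \<omega>)) = 0"
    and "card (J0 M q X fj) \<le> qs"
    and "rho M q X qs < 1"
    and "J \<subseteq> {1..q}" and "card J \<le> qs"
    and "J0 M q X fj - J \<noteq> {}"
  shows "(nrm M (proj M q X (J0 M q X fj) f))\<^sup>2 - (nrm M (proj M q X J f))\<^sup>2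
           = (nrm M (\<lambda>\<omega>. f \<omega> - proj M q X J f \<omega>))\<^sup>2
       \<and> (nrm M (\<lambda>\<omega>. f \<omega> - proj M q X J f \<omega>))\<^sup>2
           \<ge> (1 - (rho M q X qs)\<^sup>2) * kappa M q X fj (card (J0 M q X fj - J))"
proof -
  interpret P: prob_space M by fact
  note Xm = assms(4)
  define J0' where "J0' = J0 M q X fj"
  define F where "F = (\<lambda>j \<omega>. fj j (X j \<omega>))"
  have J0sub: "J0' \<subseteq> {1..q}" unfolding J0'_def J0_def by auto
  have fJ0: "finite J0'" using J0sub finite_subset by blast
  have Fs: "sqi M (F j)" if "j \<in> {1..q}" for j
  proof -
    have a: "fj j \<in> borel_measurable borel" "integrable M (\<lambda>\<omega>. (fj j (X j \<omega>))\<^sup>2)" using assms(5) that by auto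
    have b: "X j \<in> borel_measurable M" using Xm that by auto
    show ?thesis unfolding sqi_def F_def using measurable_compose[OF b a(1)] a(2) by (simp add: comp_def)
  qed
  have FH: "F j \<in> Hj M q X j" if "j \<in> {1..q}" for j
    using that Xm assms(5,6) unfolding Hj_def F_def by (intro CollectI exI[of _ "fj j"]) auto
  have f_eq: "f = (\<lambda>\<omega>. \<Sum>j\<in>{1..q}. F j \<omega>)" unfolding f_def F_def ..
  have fs: "sqi M f" unfolding f_eq by (intro P.sqi_sum Fs)
  have projspec: "proj M q X K f \<in> HJ M q X K \<and> (\<forall>h\<in>HJ M q X K. ip M (\<lambda>\<omega>. f \<omega> - proj M q X K f \<omega>) h = 0)"
    if K: "K \<subseteq> {1..q}" "card K \<le> qs" for K
  proof -
    have XK: "\<forall>j\<in>K. X j \<in> borel_measurable M" using K Xm by blast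
    have "\<exists>g\<in>HJ M q X K. \<forall>h\<in>HJ M q X K. ip M (\<lambda>\<omega>. f \<omega> - g \<omega>) h = 0"
      by (rule P.proj_exists[OF P.HJ_sqi[OF XK] P.HJ_zero P.HJ_add[OF XK] P.HJ_cmult P.cplt_HJ[OF Xm assms(8) K] fs])
    then have "\<exists>g. g \<in> HJ M q X K \<and> (\<forall>h\<in>HJ M q X K. ip M (\<lambda>\<omega>. f \<omega> - g \<omega>) h = 0)" by blast
    then show ?thesis unfolding proj_def by (rule someI_ex)
  qed
  define Pr where "Pr = proj M q X J f"
  define P0 where "P0 = proj M q X J0' f"
  have XJ: "\<forall>j\<in>J. X j \<in> borel_measurable M" using assms(9) Xm by blast
  have XJ0: "\<forall>j\<in>J0'. X j \<in> borel_measurable M" using J0sub Xm by blast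
  have PrH: "Pr \<in> HJ M q X J" and Pro: "\<And>h. h \<in> HJ M q X J \<Longrightarrow> ip M (\<lambda>\<omega>. f \<omega> - Pr \<omega>) h = 0"
    using projspec[OF assms(9,10)] unfolding Pr_def by auto
  have P0H: "P0 \<in> HJ M q X J0'" and P0o: "\<And>h. h \<in> HJ M q X J0' \<Longrightarrow> ip M (\<lambda>\<omega>. f \<omega> - P0 \<omega>) h = 0"
    using projspec[OF J0sub assms(7)[folded J0'_def]] unfolding P0_def by auto
  have Prs: "sqi M Pr" using P.HJ_sqi[OF XJ PrH] .
  have P0s: "sqi M P0" using P.HJ_sqi[OF XJ0 P0H] .
  \<comment> \<open>the part of f outside J0 has norm zero\<close>
  define f0 where "f0 = (\<lambda>\<omega>. \<Sum>j\<in>J0'. F j \<omega>)"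
  define z where "z = (\<lambda>\<omega>. \<Sum>j\<in>{1..q} - J0'. F j \<omega>)"
  have f0H: "f0 \<in> HJ M q X J0'" unfolding f0_def HJ_def using FH J0sub by (intro CollectI exI[of _ F]) auto
  have f0s: "sqi M f0" using P.HJ_sqi[OF XJ0 f0H] .
  have fz: "f = (\<lambda>\<omega>. f0 \<omega> + z \<omega>)"
  proof
    fix \<omega>
    show "f \<omega> = f0 \<omega> + z \<omega>" unfolding f_eq f0_def z_def
      using sum.subset_diff[OF J0sub, of "\<lambda>j. F j \<omega>"] by (simp add: add.commute)
  qed
  have zs: "sqi M z" unfolding z_def by (intro P.sqi_sum Fs) auto
  have zz: "ip M z z = 0" unfolding z_def
  proof (rule P.sum_zero_ip)
    fix j assume j: "j \<in> {1..q} - J0'"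
    then have "\<not> nrm M (F j) > 0" unfolding J0'_def J0_def F_def by auto
    then have "nrm M (F j) = 0" using nrm_nonneg[of M "F j"] by linarith
    then show "ip M (F j) (F j) = 0" using nrm_sq[of M "F j"] by simp
  qed (use Fs in auto)
  have ffP0: "ip M (\<lambda>\<omega>. f \<omega> - P0 \<omega>) (\<lambda>\<omega>. f \<omega> - P0 \<omega>) = 0"
  proof -
    have es: "sqi M (\<lambda>\<omega>. f \<omega> - P0 \<omega>)" using P.sqi_diff[OF fs P0s] .
    have "ip M (\<lambda>\<omega>. f \<omega> - P0 \<omega>) (\<lambda>\<omega>. f \<omega> - P0 \<omega>) = ip M (\<lambda>\<omega>. f \<omega> - P0 \<omega>) f - ip M (\<lambda>\<omega>. f \<omega> - P0 \<omega>) P0"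
      using P.ip_diff2[OF fs P0s es] .
    also have "\<dots> = ip M (\<lambda>\<omega>. f \<omega> - P0 \<omega>) f" using P0o[OF P0H] by simp
    also have "\<dots> = ip M (\<lambda>\<omega>. f \<omega> - P0 \<omega>) f0 + ip M (\<lambda>\<omega>. f \<omega> - P0 \<omega>) z"
      using P.ip_add2[OF f0s zs es] fz by simp
    also have "\<dots> = 0" using P0o[OF f0H] P.ip_zero_nrm[OF es zs zz] by simp
    finally show ?thesis .
  qed
  have nP0: "(nrm M P0)\<^sup>2 = ip M f f"
    using P.pyth[OF fs P0s P0o[OF P0H]] ffP0 nrm_sq[of M P0] by simp
  have nPr: "(nrm M Pr)\<^sup>2 = ip M f f - ip M (\<lambda>\<omega>. f \<omega> - Pr \<omega>) (\<lambda>\<omega>. f \<omega> - Pr \<omega>)"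
    using P.pyth[OF fs Prs Pro[OF PrH]] nrm_sq[of M Pr] by simp
  have part1: "(nrm M P0)\<^sup>2 - (nrm M Pr)\<^sup>2 = (nrm M (\<lambda>\<omega>. f \<omega> - Pr \<omega>))\<^sup>2"
    using nP0 nPr nrm_sq[of M "\<lambda>\<omega>. f \<omega> - Pr \<omega>"] by simp
  define K where "K = J0' - J"
  define u where "u = (\<lambda>\<omega>. \<Sum>j\<in>K. fj j (X j \<omega>))"
  define G where "G = (\<lambda>j \<omega>. if j \<in> J0' then F j \<omega> else 0)"
  define c where "c = (\<lambda>\<omega>. \<Sum>j\<in>J. G j \<omega>)"
  have Ksub: "K \<subseteq> {1..q}" unfolding K_def using J0sub by auto
  have XK: "\<forall>j\<in>K. X j \<in> borel_measurable M" using Ksub Xm by blast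
  have uH: "u \<in> HJ M q X K" unfolding u_def HJ_def using FH Ksub unfolding F_def
    by (intro CollectI exI[of _ F]) (auto simp: F_def)
  have cH: "c \<in> HJ M q X J" unfolding c_def HJ_def
  proof (intro CollectI exI[of _ G] conjI ballI)
    fix j assume "j \<in> J"
    then show "G j \<in> Hj M q X j" unfolding G_def using FH[of j] J0sub P.Hj_zero[of q X j]
      by (cases "j \<in> J0'") (auto simp: if_distrib)
  qed simp
  have us: "sqi M u" using P.HJ_sqi[OF XK uH] .
  have cs: "sqi M c" using P.HJ_sqi[OF XJ cH] .
  have fucz: "f = (\<lambda>\<omega>. u \<omega> + c \<omega> + z \<omega>)"
  proof
    fix \<omega>
    have fJ: "finite J" using assms(9) finite_subset by blast
    have "c \<omega> = (\<Sum>j\<in>J0' \<inter> J. F j \<omega>)" unfolding c_def G_def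
      using sum.inter_restrict[OF fJ, of "\<lambda>j. F j \<omega>" J0'] by (simp add: Int_commute)
    moreover have "f0 \<omega> = (\<Sum>j\<in>J0' \<inter> J. F j \<omega>) + (\<Sum>j\<in>J0' - J. F j \<omega>)"
      unfolding f0_def by (rule sum.Int_Diff[OF fJ0])
    ultimately have "f0 \<omega> = u \<omega> + c \<omega>" unfolding u_def K_def F_def by simp
    then show "f \<omega> = u \<omega> + c \<omega> + z \<omega>" using fz by simp
  qed
  define Q where "Q = (\<lambda>\<omega>. Pr \<omega> - c \<omega>)"
  have QH: "Q \<in> HJ M q X J" unfolding Q_def by (rule P.HJ_diff[OF XJ PrH cH])
  have Qs: "sqi M Q" using P.HJ_sqi[OF XJ QH] .
  define e where "e = (\<lambda>\<omega>. f \<omega> - Pr \<omega>)"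
  have es: "sqi M e" unfolding e_def using P.sqi_diff[OF fs Prs] .
  have e_eq: "e = (\<lambda>\<omega>. (u \<omega> + z \<omega>) - Q \<omega>)" unfolding e_def Q_def using fucz by auto
  have uzs: "sqi M (\<lambda>\<omega>. u \<omega> + z \<omega>)" using P.sqi_add[OF us zs] .
  have zu: "ip M z u = 0" using P.ip_zero_nrm[OF us zs zz] ip_sym[of M u z] by simp
  have zQ: "ip M z Q = 0" using P.ip_zero_nrm[OF Qs zs zz] ip_sym[of M Q z] by simp
  have ee: "ip M e e = ip M u u - ip M Q u"
  proof -
    have "ip M e e = ip M e f - ip M e Pr" unfolding e_def using P.ip_diff2[OF fs Prs es[unfolded e_def]] .
    also have "ip M e Pr = 0" unfolding e_def by (rule Pro[OF PrH])
    also have "ip M e f = ip M e (\<lambda>\<omega>. u \<omega> + c \<omega>) + ip M e z"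
      using P.ip_add2[OF P.sqi_add[OF us cs] zs es] fucz by simp
    also have "ip M e (\<lambda>\<omega>. u \<omega> + c \<omega>) = ip M e u + ip M e c" using P.ip_add2[OF us cs es] .
    also have "ip M e c = 0" unfolding e_def by (rule Pro[OF cH])
    also have "ip M e z = 0" using P.ip_zero_nrm[OF es zs zz] .
    also have "ip M e u = ip M (\<lambda>\<omega>. u \<omega> + z \<omega>) u - ip M Q u" unfolding e_eq by (rule P.ip_diff1[OF uzs Qs us])
    also have "ip M (\<lambda>\<omega>. u \<omega> + z \<omega>) u = ip M u u + ip M z u" by (rule P.ip_add1[OF us zs us])
    finally show ?thesis using zu by simp
  qed
  have QQ: "ip M Q Q = ip M u Q"
  proof -
    have "0 = ip M e Q" unfolding e_def using Pro[OF QH] by simp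
    also have "\<dots> = ip M (\<lambda>\<omega>. u \<omega> + z \<omega>) Q - ip M Q Q" unfolding e_eq by (rule P.ip_diff1[OF uzs Qs Qs])
    also have "ip M (\<lambda>\<omega>. u \<omega> + z \<omega>) Q = ip M u Q + ip M z Q" by (rule P.ip_add1[OF us zs Qs])
    finally show ?thesis using zQ by simp
  qed
  define r where "r = max (rho M q X qs) 0"
  have r0: "0 \<le> r" and r1: "r < 1" unfolding r_def using assms(8) by auto
  have cardK: "card K \<le> qs" unfolding K_def J0'_def
    using card_mono[OF fJ0, of "J0' - J"] assms(7) unfolding J0'_def by auto
  have ang: "\<bar>ip M u Q\<bar> \<le> r * nrm M u * nrm M Q" unfolding r_def
    by (rule P.angle[OF Xm Ksub assms(9) _ cardK assms(10) uH QH]) (auto simp: K_def)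
  have nQ: "nrm M Q \<le> r * nrm M u"
  proof (cases "nrm M Q > 0")
    case True
    have "nrm M Q * nrm M Q = ip M Q Q" using nrm_sq[of M Q] by (simp add: power2_eq_square)
    also have "\<dots> \<le> r * nrm M u * nrm M Q" using QQ ang by simp
    finally show ?thesis using True by (simp add: mult.commute)
  next
    case False
    then show ?thesis using nrm_nonneg[of M Q] nrm_nonneg[of M u] r0 by (simp add: zero_le_mult_iff)
  qed
  have "ip M Q u \<le> r * nrm M u * nrm M Q" using ang ip_sym[of M Q u] by simp
  also have "\<dots> \<le> r * nrm M u * (r * nrm M u)"
    using nQ r0 nrm_nonneg[of M u] by (intro mult_left_mono) auto
  also have "\<dots> = r\<^sup>2 * ip M u u" using nrm_sq[of M u] by (simp add: power2_eq_square)
  finally have "ip M Q u \<le> r\<^sup>2 * ip M u u" .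
  then have eel: "(1 - r\<^sup>2) * ip M u u \<le> ip M e e" using ee by (simp add: algebra_simps)
  define Sk where "Sk = {(nrm M (\<lambda>\<omega>. \<Sum>j\<in>J'. fj j (X j \<omega>)))\<^sup>2 | J'. J' \<subseteq> J0' \<and> card J' = card K}"
  have kap: "kappa M q X fj (card (J0 M q X fj - J)) = Min Sk"
    unfolding kappa_def Sk_def K_def J0'_def ..
  have Skf: "finite Sk"
  proof -
    have "Sk = (\<lambda>J'. (nrm M (\<lambda>\<omega>. \<Sum>j\<in>J'. fj j (X j \<omega>)))\<^sup>2) ` {J'. J' \<subseteq> J0' \<and> card J' = card K}"
      unfolding Sk_def by blast
    moreover have "finite {J'. J' \<subseteq> J0' \<and> card J' = card K}"
      using fJ0 by (rule finite_subset[rotated, OF finite_Pow_iff[THEN iffD2]]) auto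
    ultimately show ?thesis by simp
  qed
  have uSk: "ip M u u \<in> Sk" unfolding Sk_def
  proof (intro CollectI exI[of _ K] conjI)
    show "ip M u u = (nrm M (\<lambda>\<omega>. \<Sum>j\<in>K. fj j (X j \<omega>)))\<^sup>2" using nrm_sq[of M u] unfolding u_def by simp
    show "K \<subseteq> J0'" unfolding K_def by auto
  qed simp
  have kle: "Min Sk \<le> ip M u u" using Min_le[OF Skf uSk] .
  have "Sk \<noteq> {}" using uSk by auto
  then have "Min Sk \<in> Sk" using Min_in Skf by blast
  moreover have "\<forall>x\<in>Sk. 0 \<le> x" unfolding Sk_def by auto
  ultimately have k0: "0 \<le> Min Sk" by blast
  have rr: "r\<^sup>2 \<le> (rho M q X qs)\<^sup>2" unfolding r_def by (cases "rho M q X qs \<ge> 0") (auto simp: max_def)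
  have "(1 - (rho M q X qs)\<^sup>2) * Min Sk \<le> (1 - r\<^sup>2) * Min Sk" using rr k0 by (intro mult_right_mono) auto
  also have "\<dots> \<le> (1 - r\<^sup>2) * ip M u u" using kle r0 r1
    by (intro mult_left_mono) (auto simp: power_le_one abs_square_le_1)
  also have "\<dots> \<le> ip M e e" by (rule eel)
  also have "ip M e e = (nrm M (\<lambda>\<omega>. f \<omega> - Pr \<omega>))\<^sup>2" unfolding e_def by (simp add: nrm_sq)
  finally have part2: "(1 - (rho M q X qs)\<^sup>2) * kappa M q X fj (card (J0 M q X fj - J)) \<le> (nrm M (\<lambda>\<omega>. f \<omega> - Pr \<omega>))\<^sup>2"
    using kap by simp
  show ?thesis using part1 part2 unfolding Pr_def P0_def J0'_def by simp
qed

end
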